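(* For every graph $G$ and every $k\in\mathbb{N}$: if $\delta^{\infty}_{\rm e}(G)\leq k$, then $G\in\mathcal{A}_k^{(\leq k)}$. Conversely, for every $k\in\mathbb{N}_{\geq1}$, every graph $G\in\mathcal{A}_k^{(\leq k)}$ satisfies $\delta^{\infty}_{\rm e}(G)\leq 2k-1$.
   Context: All graphs are finite, undirected, loopless, and may have parallel edges; $\deg_G(v)$ is the number of edges incident to $v$ (counted with multiplicity), $E_G(v)$ the multiset of these edges. $\delta^{\infty}_{\rm e}(G)$ (edge-admissibility) is the minimum, over all linear orderings $\langle v_1,\dots,v_n\rangle$ of $V(G)$, of $\max_i \lambda_i$, where $\lambda_i$ is the minimum number of edges whose removal destroys all paths from $v_i$ to $\{v_1,\dots,v_{i-1}\}$ ($\lambda_1=0$); equivalently the maximum number of pairwise edge-disjoint paths from $v_i$ to $\{v_1,\dots,v_{i-1}\}$. Edge sums: let $G_1,G_2$ be disjoint graphs, $v_1\in V(G_1)$, $v_2\in V(G_2)$ with $\deg_{G_1}(v_1)=\deg_{G_2}(v_2)=k'$, and $\sigma:E_{G_1}(v_1)\to E_{G_2}(v_2)$ a bijection. The $k'$-edge sum of $G_1$ and $G_2$ on $v_1,v_2$ w.r.t. $\sigma$ is obtained from the disjoint union by deleting $v_1$ and $v_2$ and, for each edge $e=v_1x\in E_{G_1}(v_1)$ with $\sigma(e)=v_2y$, adding a new edge $xy$. A graph is a $(\leq k)$-edge sum of $G_1$ and $G_2$ if it is their disjoint union or a $k'$-edge sum of them for some $k'\in\{1,\dots,k\}$ and some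 choice of $v_1,v_2,\sigma$. $\mathcal{A}_k$ is the class of graphs in which all vertices except possibly one have degree at most $k$. $\mathcal{A}_k^{(\leq k)}$ is the smallest class of graphs containing $\mathcal{A}_k$ and containing every $(\leq k)$-edge sum of any two of its members. *)

theory Defs
  imports Main "HOL-Library.Multiset" "HOL-Library.Uprod"
begin

text \<open>A finite loopless multigraph is given by a finite vertex set V and a
multiset E of unordered pairs of distinct vertices of V (parallel edges =
multiplicities).\<close>

definition mgraph :: "'a set \<Rightarrow> 'a uprod multiset \<Rightarrow> bool" where
  "mgraph V E \<longleftrightarrow> finite V \<and> (\<forall>e\<in>#E. proper_uprod e \<and> set_uprod e \<subseteq> V)"

definition inc_edges :: "'a uprod multiset \<Rightarrow> 'a \<Rightarrow> 'a uprod multiset" where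
  "inc_edges E v = filter_mset (\<lambda>e. v \<in> set_uprod e) E"

definition deg :: "'a uprod multiset \<Rightarrow> 'a \<Rightarrow> nat" where
  "deg E v = size (inc_edges E v)"

definition other_end :: "'a \<Rightarrow> 'a uprod \<Rightarrow> 'a" where
  "other_end v e = (THE x. e = Upair v x)"

definition adj :: "'a uprod multiset \<Rightarrow> 'a \<Rightarrow> 'a \<Rightarrow> bool" where
  "adj E x y \<longleftrightarrow> Upair x y \<in># E"

definition edge_cut_num :: "'a uprod multiset \<Rightarrow> 'a \<Rightarrow> 'a set \<Rightarrow> nat" where
  "edge_cut_num E v S =
     (LEAST n. \<exists>F. F \<subseteq># E \<and> size F = n \<and> \<not> (\<exists>s\<in>S. (adj (E - F))\<^sup>*\<^sup>* v s))"

definition order_cost :: "'a uprod multiset \<Rightarrow> 'a list \<Rightarrow> nat" where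
  "order_cost E vs =
     Max (insert 0 {edge_cut_num E (vs ! i) (set (take i vs)) | i. i < length vs})"

definition edge_adm :: "'a set \<Rightarrow> 'a uprod multiset \<Rightarrow> nat" where
  "edge_adm V E = Min {order_cost E vs | vs. distinct vs \<and> set vs = V}"

definition in_A :: "nat \<Rightarrow> 'a set \<Rightarrow> 'a uprod multiset \<Rightarrow> bool" where
  "in_A k V E \<longleftrightarrow> mgraph V E \<and> (\<exists>u. \<forall>v\<in>V. v \<noteq> u \<longrightarrow> deg E v \<le> k)"

text \<open>A bijection sigma between E_{G1}(v1) and E_{G2}(v2), represented as a
multiset of pairs whose projections are exactly these two multisets.\<close>
definition edge_bij :: "('a uprod \<times> 'a uprod) multiset \<Rightarrow> 'a uprod multiset \<Rightarrow> 'a uprod multiset \<Rightarrow> bool" where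
  "edge_bij P A B \<longleftrightarrow> image_mset fst P = A \<and> image_mset snd P = B"

definition esum_V :: "'a set \<Rightarrow> 'a set \<Rightarrow> 'a \<Rightarrow> 'a \<Rightarrow> 'a set" where
  "esum_V V1 V2 v1 v2 = (V1 - {v1}) \<union> (V2 - {v2})"

definition esum_E :: "'a uprod multiset \<Rightarrow> 'a uprod multiset \<Rightarrow> 'a \<Rightarrow> 'a \<Rightarrow>
    ('a uprod \<times> 'a uprod) multiset \<Rightarrow> 'a uprod multiset" where
  "esum_E E1 E2 v1 v2 P =
     (E1 - inc_edges E1 v1) + (E2 - inc_edges E2 v2)
     + image_mset (\<lambda>(e, f). Upair (other_end v1 e) (other_end v2 f)) P"

inductive in_Asum :: "nat \<Rightarrow> nat set \<Rightarrow> nat uprod multiset \<Rightarrow> bool" for k where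
  base: "in_A k V E \<Longrightarrow> in_Asum k V E"
| iso: "in_Asum k V E \<Longrightarrow> bij_betw f V V' \<Longrightarrow> in_Asum k V' (image_mset (map_uprod f) E)"
| union: "in_Asum k V1 E1 \<Longrightarrow> in_Asum k V2 E2 \<Longrightarrow> V1 \<inter> V2 = {} \<Longrightarrow>
          in_Asum k (V1 \<union> V2) (E1 + E2)"
| esum: "in_Asum k V1 E1 \<Longrightarrow> in_Asum k V2 E2 \<Longrightarrow> V1 \<inter> V2 = {} \<Longrightarrow>
          v1 \<in> V1 \<Longrightarrow> v2 \<in> V2 \<Longrightarrow> deg E1 v1 = k' \<Longrightarrow> deg E2 v2 = k' \<Longrightarrow>
          1 \<le> k' \<Longrightarrow> k' \<le> k \<Longrightarrow> edge_bij P (inc_edges E1 v1) (inc_edges E2 v2) \<Longrightarrow>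
          in_Asum k (esum_V V1 V2 v1 v2) (esum_E E1 E2 v1 v2 P)"

end

theory Submission
  imports Defs
begin


definition crosses :: "'a set \<Rightarrow> 'a uprod \<Rightarrow> bool" where
  "crosses X e \<longleftrightarrow> set_uprod e \<inter> X \<noteq> {} \<and> \<not> set_uprod e \<subseteq> X"

definition bd :: "'a uprod multiset \<Rightarrow> 'a set \<Rightarrow> nat" where
  "bd E X = size (filter_mset (crosses X) E)"

lemma crosses_Upair[simp]: "crosses X (Upair p q) \<longleftrightarrow> (p \<in> X) \<noteq> (q \<in> X)"
  unfolding crosses_def by auto

lemma crosses_map: "(\<forall>x\<in>set_uprod e. g x \<in> Z \<longleftrightarrow> x \<in> W) \<Longrightarrow> crosses Z (map_uprod g e) = crosses W e"
  by (cases e) auto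

lemma bd_map_filter:
  assumes "\<And>e. e \<in># E \<Longrightarrow> Q e \<Longrightarrow> \<forall>x\<in>set_uprod e. g x \<in> Z \<longleftrightarrow> x \<in> W"
      and "\<And>e. e \<in># E \<Longrightarrow> \<not> Q e \<Longrightarrow> \<not> crosses W e"
  shows "bd (image_mset (map_uprod g) (filter_mset Q E)) Z = bd E W"
proof -
  have "filter_mset (crosses Z) (image_mset (map_uprod g) (filter_mset Q E))
      = image_mset (map_uprod g) (filter_mset (crosses Z \<circ> map_uprod g) (filter_mset Q E))"
    by (simp add: filter_mset_image_mset o_def)
  also have "filter_mset (crosses Z \<circ> map_uprod g) (filter_mset Q E) = filter_mset (crosses W) E"
  proof -
    have "filter_mset (crosses Z \<circ> map_uprod g) (filter_mset Q E) = filter_mset (\<lambda>e. Q e \<and> crosses W e) E"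
      unfolding filter_filter_mset
    proof (rule filter_mset_cong[OF refl])
      fix e assume "e \<in># E"
      then show "(Q e \<and> (crosses Z \<circ> map_uprod g) e) = (Q e \<and> crosses W e)"
        using crosses_map[of e g Z W] assms(1)[of e] apply simp by blast
    qed
    also have "\<dots> = filter_mset (crosses W) E"
    proof (rule filter_mset_cong[OF refl])
      fix e assume "e \<in># E"
      then show "(Q e \<and> crosses W e) = crosses W e" using assms(2)[of e] by auto
    qed
    finally show ?thesis .
  qed
  finally show ?thesis unfolding bd_def by simp
qed

lemma bd_map:
  assumes "\<And>e. e \<in># E \<Longrightarrow> \<forall>x\<in>set_uprod e. g x \<in> Z \<longleftrightarrow> x \<in> W"
  shows "bd (image_mset (map_uprod g) E) Z = bd E W"
  using bd_map_filter[of E "\<lambda>_. True" g Z W] assms by simp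

lemma bd_plus[simp]: "bd (A + B) X = bd A X + bd B X"
  unfolding bd_def by simp

lemma bd_cong: "(\<And>e. e \<in># E \<Longrightarrow> crosses X e = crosses Y e) \<Longrightarrow> bd E X = bd E Y"
  unfolding bd_def by (metis filter_mset_cong)

lemma bd_zero: "(\<And>e. e \<in># E \<Longrightarrow> \<not> crosses X e) \<Longrightarrow> bd E X = 0"
  unfolding bd_def by (simp add: filter_mset_eq_mempty_iff)

lemma mgraph_bd_V: "mgraph V E \<Longrightarrow> bd E V = 0"
  by (rule bd_zero) (auto simp: mgraph_def crosses_def)

lemma mgraph_bd_single: "mgraph V E \<Longrightarrow> bd E {x} = deg E x"
  unfolding bd_def deg_def inc_edges_def
proof (rule arg_cong[where f=size], rule filter_mset_cong[OF refl])
  fix e assume "mgraph V E" "e \<in># E"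
  then have "proper_uprod e" by (auto simp: mgraph_def)
  then show "crosses {x} e = (x \<in> set_uprod e)"
    by (cases e) auto
qed

lemma sum_ind: "size (filter_mset P M) = sum_mset (image_mset (\<lambda>e. of_bool (P e)) M)"
  by (induction M) auto

lemma bd_four:
  assumes "\<And>e. of_bool (crosses A e) + of_bool (crosses B e) \<le> of_bool (crosses C e) + (of_bool (crosses D e)::nat)"
  shows "bd E A + bd E B \<le> bd E C + bd E D"
  unfolding bd_def sum_ind
proof (induction E)
  case (add x E)
  then show ?case using assms[of x] by simp
qed simp

lemma bd_submod: "bd E (A \<inter> B) + bd E (A \<union> B) \<le> bd E A + bd E B"
  by (rule bd_four) (case_tac e, auto)

lemma bd_posimod: "bd E (A - B) + bd E (B - A) \<le> bd E A + bd E B"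
  by (rule bd_four) (case_tac e, auto)



definition before :: "'a list \<Rightarrow> 'a \<Rightarrow> 'a \<Rightarrow> bool" where
  "before vs y x \<longleftrightarrow> (\<exists>as bs. vs = as @ x # bs \<and> y \<in> set as)"

lemma before_nth: "before vs y x \<longleftrightarrow> (\<exists>i j. i < j \<and> j < length vs \<and> vs ! i = y \<and> vs ! j = x)"
proof
  assume "before vs y x"
  then obtain as bs where vs: "vs = as @ x # bs" "y \<in> set as" unfolding before_def by blast
  then obtain i where "i < length as" "as ! i = y" by (auto simp: in_set_conv_nth)
  then show "\<exists>i j. i < j \<and> j < length vs \<and> vs ! i = y \<and> vs ! j = x"
    using vs by (intro exI[of _ i] exI[of _ "length as"]) (auto simp: nth_append)
next
  assume "\<exists>i j. i < j \<and> j < length vs \<and> vs ! i = y \<and> vs ! j = x"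
  then obtain i j where ij: "i < j" "j < length vs" "vs ! i = y" "vs ! j = x" by blast
  have "vs = take j vs @ x # drop (Suc j) vs" using ij id_take_nth_drop[of j vs] by simp
  moreover have "y \<in> set (take j vs)" using ij by (auto simp: in_set_conv_nth intro!: exI[of _ i])
  ultimately show "before vs y x" unfolding before_def by blast
qed

lemma before_take: "distinct vs \<Longrightarrow> i < length vs \<Longrightarrow> before vs y (vs ! i) \<longleftrightarrow> y \<in> set (take i vs)"
  unfolding before_nth
  by (auto simp: in_set_conv_nth nth_eq_iff_index_eq) (metis less_trans)

lemma before_set: "before vs y x \<Longrightarrow> y \<in> set vs \<and> x \<in> set vs"
  unfolding before_nth by auto

lemma before_irrefl: "distinct vs \<Longrightarrow> \<not> before vs x x"
  unfolding before_nth by (auto simp: nth_eq_iff_index_eq)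

lemma before_trans: "distinct vs \<Longrightarrow> before vs x y \<Longrightarrow> before vs y z \<Longrightarrow> before vs x z"
  unfolding before_nth by (auto simp: nth_eq_iff_index_eq) (metis less_trans)

lemma before_total: "distinct vs \<Longrightarrow> x \<in> set vs \<Longrightarrow> y \<in> set vs \<Longrightarrow> x \<noteq> y \<Longrightarrow> before vs x y \<or> before vs y x"
  unfolding before_nth by (auto simp: in_set_conv_nth) (metis linorder_neqE_nat)

lemma before_Nil[simp]: "\<not> before [] y x"
  unfolding before_def by auto

lemma before_Cons: "before (v # vs) y x \<longleftrightarrow> (y = v \<and> x \<in> set vs) \<or> before vs y x"
proof
  assume "before (v # vs) y x"
  then obtain as bs where h: "v # vs = as @ x # bs" "y \<in> set as" unfolding before_def by blast
  then obtain as' where "as = v # as'" by (cases as) auto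
  with h show "(y = v \<and> x \<in> set vs) \<or> before vs y x" unfolding before_def by auto
next
  assume "(y = v \<and> x \<in> set vs) \<or> before vs y x"
  then show "before (v # vs) y x"
  proof
    assume "y = v \<and> x \<in> set vs"
    then obtain as bs where "vs = as @ x # bs" by (metis split_list)
    then show ?thesis using \<open>y = v \<and> x \<in> set vs\<close> unfolding before_def
      by (intro exI[of _ "v # as"] exI[of _ bs]) auto
  next
    assume "before vs y x"
    then obtain as bs where "vs = as @ x # bs" "y \<in> set as" unfolding before_def by blast
    then show ?thesis unfolding before_def
      by (intro exI[of _ "v # as"] exI[of _ bs]) auto
  qed
qed

lemma before_filter: "before (filter P vs) y x \<Longrightarrow> before vs y x"
proof (induction vs)
  case (Cons v vs)
  show ?case
  proof (cases "P v")
    case True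
    with Cons.prems have "(y = v \<and> x \<in> set (filter P vs)) \<or> before (filter P vs) y x"
      by (simp add: before_Cons)
    then show ?thesis using Cons.IH by (auto simp: before_Cons)
  next
    case False
    with Cons.prems Cons.IH show ?thesis by (simp add: before_Cons)
  qed
qed simp

lemma before_append: "before (xs @ ys) y x \<Longrightarrow> before xs y x \<or> (x \<in> set ys \<and> (y \<in> set xs \<or> before ys y x))"
proof (induction xs)
  case Nil
  then show ?case using before_set[of ys y x] by simp
next
  case (Cons a xs)
  then have "(y = a \<and> x \<in> set (xs @ ys)) \<or> before (xs @ ys) y x"
    by (simp add: before_Cons)
  then show ?case
  proof
    assume h: "y = a \<and> x \<in> set (xs @ ys)"
    show ?thesis
    proof (cases "x \<in> set xs")
      case True then show ?thesis using h by (simp add: before_Cons)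
    next
      case False then show ?thesis using h by simp
    qed
  next
    assume "before (xs @ ys) y x"
    from Cons.IH[OF this] show ?thesis by (auto simp: before_Cons)
  qed
qed

lemma before_map: "before (map g vs) y' x' \<Longrightarrow> \<exists>y x. g y = y' \<and> g x = x' \<and> before vs y x"
proof -
  assume "before (map g vs) y' x'"
  then obtain i j where "i < j" "j < length vs" "g (vs ! i) = y'" "g (vs ! j) = x'"
    unfolding before_nth by auto
  then show ?thesis unfolding before_nth by blast
qed

definition good :: "nat \<Rightarrow> 'a set \<Rightarrow> 'a uprod multiset \<Rightarrow> 'a list \<Rightarrow> bool" where
  "good k V E vs \<longleftrightarrow> distinct vs \<and> set vs = V \<and>
     (\<forall>x\<in>set vs. \<exists>X\<subseteq>V. x \<in> X \<and> bd E X \<le> k \<and> (\<forall>y. before vs y x \<longrightarrow> y \<notin> X))"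

lemma adj_reach_in:
  assumes "(adj E')\<^sup>*\<^sup>* v s" "v \<in> X" "\<And>e. e \<in># E' \<Longrightarrow> \<not> crosses X e"
  shows "s \<in> X"
  using assms(1,2)
proof induction
  case (step y z)
  then have "Upair y z \<in># E'" by (simp add: adj_def)
  from assms(3)[OF this] step show ?case by auto
qed

lemma cut_le_bd:
  assumes "v \<in> X" "X \<inter> S = {}"
  shows "edge_cut_num E v S \<le> bd E X"
proof -
  let ?F = "filter_mset (crosses X) E"
  have eq: "E - ?F = filter_mset (\<lambda>e. \<not> crosses X e) E"
    apply (rule multiset_eqI) apply (simp only: count_diff count_filter_mset) by simp
  have nc: "\<And>e. e \<in># E - ?F \<Longrightarrow> \<not> crosses X e" unfolding eq by simp
  have "s \<in> X" if "(adj (E - ?F))\<^sup>*\<^sup>* v s" for s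
    using adj_reach_in[OF that assms(1) nc] .
  then have nr: "\<not> (\<exists>s\<in>S. (adj (E - ?F))\<^sup>*\<^sup>* v s)"
    using assms(2) by blast
  have "?F \<subseteq># E" by simp
  moreover have "size ?F = bd E X" by (simp add: bd_def)
  ultimately have "\<exists>F. F \<subseteq># E \<and> size F = bd E X \<and> \<not> (\<exists>s\<in>S. (adj (E - F))\<^sup>*\<^sup>* v s)"
    using nr by blast
  then show ?thesis unfolding edge_cut_num_def by (rule Least_le)
qed


lemma finite_orders: "finite V \<Longrightarrow> finite {vs. distinct vs \<and> set vs = V}"
  by (rule finite_subset[OF _ finite_lists_length_eq[of V "card V"]]) (auto simp: distinct_card)

lemma finite_costs: "finite {edge_cut_num E (vs ! i) (set (take i vs)) | i. i < length vs}"
proof -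
  have "{edge_cut_num E (vs ! i) (set (take i vs)) | i. i < length vs}
        = (\<lambda>i. edge_cut_num E (vs ! i) (set (take i vs))) ` {..<length vs}" by auto
  then show ?thesis by simp
qed

lemma good_adm:
  assumes "mgraph V E" "good k V E vs"
  shows "edge_adm V E \<le> k"
proof -
  have fin: "finite V" using assms(1) by (simp add: mgraph_def)
  have g: "distinct vs" "set vs = V" using assms(2) by (auto simp: good_def)
  have "order_cost E vs \<le> k"
    unfolding order_cost_def
  proof (rule Max.boundedI)
    show "finite (insert 0 {edge_cut_num E (vs ! i) (set (take i vs)) | i. i < length vs})"
      using finite_costs by simp
  next
    fix a assume "a \<in> insert 0 {edge_cut_num E (vs ! i) (set (take i vs)) | i. i < length vs}"
    then show "a \<le> k"
    proof
      assume "a \<in> {edge_cut_num E (vs ! i) (set (take i vs)) | i. i < length vs}"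
      then obtain i where i: "i < length vs" "a = edge_cut_num E (vs ! i) (set (take i vs))" by blast
      then have "vs ! i \<in> set vs" by simp
      then obtain X where X: "X \<subseteq> V" "vs ! i \<in> X" "bd E X \<le> k" "\<forall>y. before vs y (vs ! i) \<longrightarrow> y \<notin> X"
        using assms(2) unfolding good_def by blast
      have "X \<inter> set (take i vs) = {}" using X(4) before_take[OF g(1) i(1)] by auto
      then show "a \<le> k" using cut_le_bd[OF X(2), of "set (take i vs)" E] X(3) i(2) by simp
    qed simp
  qed simp
  have "edge_adm V E \<le> order_cost E vs"
    unfolding edge_adm_def
    using finite_orders[OF fin] g by (intro Min_le) auto
  with \<open>order_cost E vs \<le> k\<close> show ?thesis by simp
qed

lemma bd_le_cut:
  assumes "mgraph V E" "v \<in> V" "v \<notin> S"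
  shows "\<exists>X\<subseteq>V. v \<in> X \<and> X \<inter> S = {} \<and> bd E X \<le> edge_cut_num E v S"
proof -
  let ?P = "\<lambda>n. \<exists>F. F \<subseteq># E \<and> size F = n \<and> \<not> (\<exists>s\<in>S. (adj (E - F))\<^sup>*\<^sup>* v s)"
  have "?P (size E)"
  proof (intro exI[of _ E] conjI)
    have "(adj (E - E))\<^sup>*\<^sup>* v s \<Longrightarrow> s = v" for s
      by (induction rule: rtranclp_induct) (auto simp: adj_def)
    then show "\<not> (\<exists>s\<in>S. (adj (E - E))\<^sup>*\<^sup>* v s)" using assms(3) by blast
  qed auto
  then have "?P (edge_cut_num E v S)" unfolding edge_cut_num_def by (rule LeastI)
  then obtain F where F: "F \<subseteq># E" "size F = edge_cut_num E v S" "\<not> (\<exists>s\<in>S. (adj (E - F))\<^sup>*\<^sup>* v s)"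
    by blast
  define X where "X = {s. (adj (E - F))\<^sup>*\<^sup>* v s}"
  have XV: "X \<subseteq> V"
  proof
    fix s assume "s \<in> X"
    then have "(adj (E - F))\<^sup>*\<^sup>* v s" by (simp add: X_def)
    then show "s \<in> V"
    proof (induction rule: rtranclp_induct)
      case (step y z)
      then have "Upair y z \<in># E" unfolding adj_def by (meson in_diffD)
      then show ?case using assms(1) unfolding mgraph_def by auto
    qed (simp add: assms(2))
  qed
  have "filter_mset (crosses X) E \<subseteq># F"
  proof (rule mset_subset_eqI)
    fix e
    show "count (filter_mset (crosses X) E) e \<le> count F e"
    proof (cases "crosses X e")
      case True
      then obtain a b where e: "e = Upair a b" "a \<in> X" "b \<notin> X"
      proof (cases e)
        case (Upair p q)
        show ?thesis
        proof (cases "p \<in> X")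
          case True then show ?thesis using that Upair \<open>crosses X e\<close> by auto
        next
          case False then show ?thesis using that[of q p] Upair \<open>crosses X e\<close> by (auto simp: Upair_inject)
        qed
      qed
      have "\<not> e \<in># E - F"
      proof
        assume "e \<in># E - F"
        then have "adj (E - F) a b" using e by (simp add: adj_def)
        then have "b \<in> X" using e(2) unfolding X_def by (auto intro: rtranclp.rtrancl_into_rtrancl)
        then show False using e(3) by simp
      qed
      then show ?thesis using True by (simp add: not_in_iff)
    qed simp
  qed
  then have "bd E X \<le> size F" unfolding bd_def by (rule size_mset_mono)
  moreover have "v \<in> X" by (simp add: X_def)
  moreover have "X \<inter> S = {}" using F(3) by (auto simp: X_def)
  ultimately show ?thesis using XV F(2) by auto
qed

lemma adm_good:
  assumes "mgraph V E" "edge_adm V E \<le> k"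
  shows "\<exists>vs. good k V E vs"
proof -
  have fin: "finite V" using assms(1) by (simp add: mgraph_def)
  let ?C = "{order_cost E vs | vs. distinct vs \<and> set vs = V}"
  have "?C = order_cost E ` {vs. distinct vs \<and> set vs = V}" by auto
  then have finC: "finite ?C" using finite_orders[OF fin] by simp
  have "?C \<noteq> {}" using finite_distinct_list[OF fin] by auto
  from Min_in[OF finC this] obtain vs where vs: "distinct vs" "set vs = V" "order_cost E vs = edge_adm V E"
    unfolding edge_adm_def by auto
  have "\<forall>x\<in>set vs. \<exists>X\<subseteq>V. x \<in> X \<and> bd E X \<le> k \<and> (\<forall>y. before vs y x \<longrightarrow> y \<notin> X)"
  proof
    fix x assume "x \<in> set vs"
    then obtain i where i: "i < length vs" "vs ! i = x" by (auto simp: in_set_conv_nth)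
    have "edge_cut_num E x (set (take i vs)) \<le> order_cost E vs"
      unfolding order_cost_def using i by (intro Max_ge) (auto simp: finite_costs)
    moreover have "x \<notin> set (take i vs)" using i vs(1)
      by (metis before_irrefl before_take)
    moreover have "x \<in> V" using i vs(2) by auto
    ultimately obtain X where X: "X \<subseteq> V" "x \<in> X" "X \<inter> set (take i vs) = {}" "bd E X \<le> k"
      using bd_le_cut[OF assms(1), of x "set (take i vs)"] vs(3) assms(2) by fastforce
    have "\<forall>y. before vs y x \<longrightarrow> y \<notin> X" using X(3) before_take[OF vs(1) i(1)] i(2) by auto
    then show "\<exists>X\<subseteq>V. x \<in> X \<and> bd E X \<le> k \<and> (\<forall>y. before vs y x \<longrightarrow> y \<notin> X)" using X by blast
  qed
  then show ?thesis using vs unfolding good_def by blast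
qed


definition ginv :: "nat \<Rightarrow> 'a set \<Rightarrow> 'a uprod multiset \<Rightarrow> bool" where
  "ginv k V E \<longleftrightarrow> mgraph V E \<and> (\<forall>w\<in>V. \<exists>vs. good k V E vs \<and> hd vs = w)"

lemma good_Nil: "good k {} E []"
  by (simp add: good_def)

lemma inv_good: "ginv k V E \<Longrightarrow> \<exists>vs. good k V E vs"
  unfolding ginv_def using good_Nil by (cases "V = {}") auto

lemma inv_adm: "ginv k V E \<Longrightarrow> edge_adm V E \<le> k"
  using inv_good good_adm unfolding ginv_def by blast

lemma edge_in: "mgraph V E \<Longrightarrow> e \<in># E \<Longrightarrow> \<exists>a b. e = Upair a b \<and> a \<noteq> b \<and> a \<in> V \<and> b \<in> V"
  unfolding mgraph_def by (cases e) fastforce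

lemma bd_compl: "mgraph V E \<Longrightarrow> bd E (V - Y) = bd E Y"
  by (rule bd_cong) (auto dest!: edge_in)

lemma bd_disj: "mgraph V E \<Longrightarrow> X \<inter> V = {} \<Longrightarrow> bd E X = 0"
  by (rule bd_zero) (auto dest!: edge_in)

lemma good_head: "distinct (w # t) \<Longrightarrow> \<not> before (w # t) y w"
  by (auto simp: before_Cons dest: before_set)

lemma inv_base:
  assumes "in_A k V E"
  shows "ginv k V E"
proof -
  have mg: "mgraph V E" using assms by (simp add: in_A_def)
  then have fin: "finite V" by (simp add: mgraph_def)
  obtain u where u: "\<forall>v\<in>V. v \<noteq> u \<longrightarrow> deg E v \<le> k" using assms by (auto simp: in_A_def)
  have "\<exists>vs. good k V E vs \<and> hd vs = w" if w: "w \<in> V" for w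
  proof -
    obtain L where L: "set L = V - {w, u}" "distinct L"
      using finite_distinct_list[of "V - {w, u}"] fin by auto
    define t where "t = (if u \<in> V \<and> u \<noteq> w then u # L else L)"
    have t: "set t = V - {w}" "distinct t" using L w by (auto simp: t_def)
    let ?vs = "w # t"
    have dist: "distinct ?vs" using t by simp
    have "\<exists>X\<subseteq>V. x \<in> X \<and> bd E X \<le> k \<and> (\<forall>y. before ?vs y x \<longrightarrow> y \<notin> X)" if x: "x \<in> set ?vs" for x
    proof (cases "x = w")
      case True
      then show ?thesis using good_head[OF dist] mgraph_bd_V[OF mg] w by (intro exI[of _ V]) auto
    next
      case xw: False
      show ?thesis
      proof (cases "x = u")
        case True
        have uV: "u \<in> V" "u \<noteq> w" using x xw True t by auto
        then have tu: "t = u # L" by (simp add: t_def)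
        have uL: "u \<notin> set L" using L(1) by auto
        have "y = w" if b: "before ?vs y x" for y
        proof -
          from b True tu have "(y = w \<and> u \<in> set t) \<or> before (u # L) y u" by (simp add: before_Cons)
          moreover have "\<not> before (u # L) y u"
          proof
            assume "before (u # L) y u"
            then have "(y = u \<and> u \<in> set L) \<or> before L y u" by (simp add: before_Cons)
            then show False using uL before_set[of L y u] by blast
          qed
          ultimately show ?thesis by blast
        qed
        moreover have "bd E (V - {w}) \<le> k"
          using bd_compl[OF mg, of "{w}"] mgraph_bd_single[OF mg, of w] u w True xw by simp
        ultimately show ?thesis using x xw by (intro exI[of _ "V - {w}"]) (auto simp: t)
      next
        case False
        then show ?thesis using x xw u mgraph_bd_single[OF mg, of x] before_irrefl[OF dist] t
          by (intro exI[of _ "{x}"]) auto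
      qed
    qed
    then have "good k V E ?vs" using dist t w by (auto simp: good_def)
    then show ?thesis by auto
  qed
  then show ?thesis using mg by (simp add: ginv_def)
qed

lemma inv_iso:
  assumes "ginv k V E" "bij_betw f V V'"
  shows "ginv k V' (image_mset (map_uprod f) E)"
proof -
  have mg: "mgraph V E" using assms(1) by (simp add: ginv_def)
  have inj: "inj_on f V" and img: "f ` V = V'" using assms(2) by (auto simp: bij_betw_def)
  have mg': "mgraph V' (image_mset (map_uprod f) E)"
    unfolding mgraph_def
  proof (intro conjI ballI)
    show "finite V'" using mg img by (auto simp: mgraph_def)
  next
    fix e' assume "e' \<in># image_mset (map_uprod f) E"
    then obtain e where e: "e \<in># E" "e' = map_uprod f e" by auto
    then obtain a b where ab: "e = Upair a b" "a \<noteq> b" "a \<in> V" "b \<in> V" using edge_in[OF mg] by blast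
    have "f a \<noteq> f b" using ab inj_onD[OF inj, of a b] by blast
    then show "proper_uprod e'" using e ab by simp
    show "set_uprod e' \<subseteq> V'" using e ab img by auto
  qed
  have "\<exists>vs. good k V' (image_mset (map_uprod f) E) vs \<and> hd vs = w'" if w': "w' \<in> V'" for w'
  proof -
    obtain w where w: "w \<in> V" "f w = w'" using w' img by auto
    then obtain vs where vs: "good k V E vs" "hd vs = w" using assms(1) by (auto simp: ginv_def)
    have dvs: "distinct vs" "set vs = V" using vs by (auto simp: good_def)
    have "good k V' (image_mset (map_uprod f) E) (map f vs)"
      unfolding good_def
    proof (intro conjI ballI)
      show "distinct (map f vs)" using dvs inj by (simp add: distinct_map)
      show "set (map f vs) = V'" using dvs img by simp
    next
      fix x' assume "x' \<in> set (map f vs)"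
      then obtain x where x: "x \<in> set vs" "x' = f x" by auto
      then obtain X where X: "X \<subseteq> V" "x \<in> X" "bd E X \<le> k" "\<forall>y. before vs y x \<longrightarrow> y \<notin> X"
        using vs(1) unfolding good_def by blast
      have "bd (image_mset (map_uprod f) E) (f ` X) = bd E X"
      proof (rule bd_map)
        fix e assume "e \<in># E"
        then have "set_uprod e \<subseteq> V" using mg by (auto simp: mgraph_def)
        then show "\<forall>a\<in>set_uprod e. f a \<in> f ` X \<longleftrightarrow> a \<in> X"
          using X(1) inj_on_image_mem_iff[OF inj _ X(1)] by blast
      qed
      moreover have "\<forall>y'. before (map f vs) y' x' \<longrightarrow> y' \<notin> f ` X"
      proof (intro allI impI)
        fix y' assume b: "before (map f vs) y' x'"
        obtain y x0 where yx: "f y = y'" "f x0 = x'" "before vs y x0" using before_map[OF b] by blast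
        have xV: "x0 \<in> V" "x \<in> V" using before_set[OF yx(3)] x dvs by auto
        have "f x0 = f x" using x(2) yx(2) by simp
        then have "x0 = x" using inj_onD[OF inj _ xV] by blast
        then have "y \<notin> X" using X(4) yx(3) by auto
        moreover have "y \<in> V" using before_set[OF yx(3)] dvs by auto
        ultimately show "y' \<notin> f ` X" using yx(1) inj_on_image_mem_iff[OF inj _ X(1)] by blast
      qed
      ultimately show "\<exists>X'\<subseteq>V'. x' \<in> X' \<and> bd (image_mset (map_uprod f) E) X' \<le> k \<and>
                          (\<forall>y. before (map f vs) y x' \<longrightarrow> y \<notin> X')"
        using X x img by (intro exI[of _ "f ` X"]) auto
    qed
    moreover have "hd (map f vs) = w'" using vs w dvs by (cases vs) auto
    ultimately show ?thesis by blast
  qed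
  then show ?thesis using mg' by (simp add: ginv_def)
qed

lemma union_side:
  assumes "mgraph V1 E1" "mgraph V2 E2" "V1 \<inter> V2 = {}" "good k V1 E1 vs1" "good k V2 E2 vs2"
  shows "good k (V1 \<union> V2) (E1 + E2) (vs1 @ vs2)"
  unfolding good_def
proof (intro conjI ballI)
  have d: "distinct vs1" "set vs1 = V1" "distinct vs2" "set vs2 = V2" using assms(4,5) by (auto simp: good_def)
  then show "distinct (vs1 @ vs2)" "set (vs1 @ vs2) = V1 \<union> V2" using assms(3) by auto
  fix x assume "x \<in> set (vs1 @ vs2)"
  then consider "x \<in> set vs1" | "x \<in> set vs2" by auto
  then show "\<exists>X\<subseteq>V1 \<union> V2. x \<in> X \<and> bd (E1 + E2) X \<le> k \<and> (\<forall>y. before (vs1 @ vs2) y x \<longrightarrow> y \<notin> X)"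
  proof cases
    case 1
    then obtain X where X: "X \<subseteq> V1" "x \<in> X" "bd E1 X \<le> k" "\<forall>y. before vs1 y x \<longrightarrow> y \<notin> X"
      using assms(4) by (auto simp: good_def)
    have "bd E2 X = 0" using bd_disj[OF assms(2)] X(1) assms(3) by blast
    moreover have "\<forall>y. before (vs1 @ vs2) y x \<longrightarrow> y \<notin> X"
    proof (intro allI impI)
      fix y assume "before (vs1 @ vs2) y x"
      from before_append[OF this] have "before vs1 y x \<or> x \<in> set vs2" by blast
      moreover have "x \<notin> set vs2" using 1 d assms(3) by auto
      ultimately show "y \<notin> X" using X(4) by blast
    qed
    ultimately show ?thesis using X by (intro exI[of _ X]) auto
  next
    case 2
    then obtain X where X: "X \<subseteq> V2" "x \<in> X" "bd E2 X \<le> k" "\<forall>y. before vs2 y x \<longrightarrow> y \<notin> X"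
      using assms(5) by (auto simp: good_def)
    have "bd E1 X = 0" using bd_disj[OF assms(1)] X(1) assms(3) by blast
    moreover have "\<forall>y. before (vs1 @ vs2) y x \<longrightarrow> y \<notin> X"
    proof (intro allI impI)
      fix y assume "before (vs1 @ vs2) y x"
      from before_append[OF this] consider "before vs1 y x" | "y \<in> set vs1" | "before vs2 y x" by blast
      then show "y \<notin> X"
      proof cases
        case 1 then have "x \<in> set vs1" using before_set by metis
        then show ?thesis using 2 d assms(3) by auto
      next
        case 2 then show ?thesis using X(1) d assms(3) by auto
      next
        case 3 then show ?thesis using X(4) by blast
      qed
    qed
    ultimately show ?thesis using X by (intro exI[of _ X]) auto
  qed
qed

lemma inv_union:
  assumes "ginv k V1 E1" "ginv k V2 E2" "V1 \<inter> V2 = {}"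
  shows "ginv k (V1 \<union> V2) (E1 + E2)"
proof -
  have mg: "mgraph V1 E1" "mgraph V2 E2" using assms by (auto simp: ginv_def)
  have mgu: "mgraph (V1 \<union> V2) (E1 + E2)" using mg by (auto simp: mgraph_def)
  have side: "\<exists>vs. good k (A \<union> B) (EA + EB) vs \<and> hd vs = w"
    if h: "ginv k A EA" "ginv k B EB" "A \<inter> B = {}" "w \<in> A" for A B EA EB w
  proof -
    from h(1,4) obtain vs1 where vs1: "good k A EA vs1" "hd vs1 = w" unfolding ginv_def by blast
    obtain vs2 where vs2: "good k B EB vs2" using inv_good h(2) by blast
    have "vs1 \<noteq> []" using vs1 that(4) by (auto simp: good_def)
    then show ?thesis using union_side[OF _ _ h(3) vs1(1) vs2] h vs1(2)
      by (intro exI[of _ "vs1 @ vs2"]) (auto simp: ginv_def)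
  qed
  have "\<exists>vs. good k (V1 \<union> V2) (E1 + E2) vs \<and> hd vs = w" if "w \<in> V1 \<union> V2" for w
  proof (cases "w \<in> V1")
    case True then show ?thesis using side[OF assms] by blast
  next
    case False
    then have "w \<in> V2" using that by auto
    from side[OF assms(2,1) _ this] assms(3) show ?thesis by (auto simp: Un_commute add.commute Int_commute)
  qed
  then show ?thesis using mgu by (simp add: ginv_def)
qed


lemma other_end: "v \<in> set_uprod e \<Longrightarrow> e = Upair v (other_end v e)"
proof (cases e)
  case (Upair a b)
  assume v: "v \<in> set_uprod e"
  show ?thesis
  proof (cases "v = a")
    case True
    have "other_end v e = b" unfolding other_end_def
      by (rule the_equality) (use Upair True in auto)
    then show ?thesis using Upair True by simp
  next
    case False
    then have "v = b" using v Upair by auto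
    have "other_end v e = a" unfolding other_end_def
      by (rule the_equality) (use Upair \<open>v = b\<close> in auto)
    then show ?thesis using Upair \<open>v = b\<close> by simp
  qed
qed

lemma diff_filter: "M - filter_mset P M = filter_mset (\<lambda>x. \<not> P x) M"
  apply (rule multiset_eqI) apply (simp only: count_diff count_filter_mset) by simp

lemma bd_image: "bd (image_mset h M) Z = size (filter_mset (\<lambda>x. crosses Z (h x)) M)"
  unfolding bd_def filter_mset_image_mset by simp

lemma pair_props:
  assumes mg1: "mgraph V1 E1" and eb: "edge_bij P (inc_edges E1 v1) B"
    and p: "(e, f) \<in># P"
  shows "e = Upair v1 (other_end v1 e) \<and> other_end v1 e \<in> V1 \<and> other_end v1 e \<noteq> v1"
proof -
  have "e \<in># image_mset fst P" using p by force
  moreover have h: "image_mset fst P = inc_edges E1 v1" using eb by (simp add: edge_bij_def)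
  ultimately have "e \<in># inc_edges E1 v1" by (simp only: h)
  then have e: "e \<in># E1" "v1 \<in> set_uprod e" by (auto simp: inc_edges_def)
  have eq: "e = Upair v1 (other_end v1 e)" using other_end[OF e(2)] .
  have "proper_uprod e" "set_uprod e \<subseteq> V1" using mg1 e(1) by (auto simp: mgraph_def)
  then have "other_end v1 e \<in> V1" "other_end v1 e \<noteq> v1"
    using eq by (metis insert_subset set_uprod_simps, metis proper_uprod_simps)
  then show ?thesis using eq by blast
qed

lemma edge_bij_swap: "edge_bij P A B \<Longrightarrow> edge_bij (image_mset prod.swap P) B A"
  unfolding edge_bij_def by (simp add: multiset.map_comp o_def)

lemma esum_E_swap: "esum_E E1 E2 v1 v2 P = esum_E E2 E1 v2 v1 (image_mset prod.swap P)"
proof -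
  have "image_mset (\<lambda>(e, f). Upair (other_end v1 e) (other_end v2 f)) P
      = image_mset (\<lambda>(e, f). Upair (other_end v2 e) (other_end v1 f)) (image_mset prod.swap P)"
    by (simp add: multiset.map_comp o_def case_prod_beta) (rule image_mset_cong, auto)
  then show ?thesis unfolding esum_E_def by (simp add: ac_simps)
qed

lemma esum_V_swap: "esum_V V1 V2 v1 v2 = esum_V V2 V1 v2 v1"
  unfolding esum_V_def by auto

lemma esum_bd1:
  assumes mg1: "mgraph V1 E1" and mg2: "mgraph V2 E2" and disj: "V1 \<inter> V2 = {}"
    and eb: "edge_bij P (inc_edges E1 v1) (inc_edges E2 v2)"
    and XV: "X \<subseteq> V1"
  shows "bd (esum_E E1 E2 v1 v2 P) ((X - {v1}) \<union> (if v1 \<in> X then V2 - {v2} else {})) = bd E1 X"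
proof -
  define X' where "X' = (X - {v1}) \<union> (if v1 \<in> X then V2 - {v2} else {})"
  have mem1: "a \<in> X' \<longleftrightarrow> a \<in> X" if "a \<in> V1" "a \<noteq> v1" for a
    using that disj by (auto simp: X'_def)
  have mem2: "a \<in> X' \<longleftrightarrow> v1 \<in> X" if "a \<in> V2" "a \<noteq> v2" for a
    using that disj XV by (auto simp: X'_def)
  have a: "bd (E1 - inc_edges E1 v1) X' = bd (E1 - inc_edges E1 v1) X"
  proof (rule bd_cong)
    fix e assume "e \<in># E1 - inc_edges E1 v1"
    then have "e \<in># E1" "v1 \<notin> set_uprod e" unfolding inc_edges_def diff_filter by auto
    moreover obtain p q where "e = Upair p q" "p \<in> V1" "q \<in> V1" using edge_in[OF mg1 \<open>e \<in># E1\<close>] by blast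
    ultimately show "crosses X' e = crosses X e" using mem1 by auto
  qed
  have b: "bd (E2 - inc_edges E2 v2) X' = 0"
  proof (rule bd_zero)
    fix e assume "e \<in># E2 - inc_edges E2 v2"
    then have "e \<in># E2" "v2 \<notin> set_uprod e" unfolding inc_edges_def diff_filter by auto
    moreover obtain p q where "e = Upair p q" "p \<in> V2" "q \<in> V2" using edge_in[OF mg2 \<open>e \<in># E2\<close>] by blast
    ultimately show "\<not> crosses X' e" using mem2 by auto
  qed
  have h1: "image_mset fst P = inc_edges E1 v1" using eb by (simp add: edge_bij_def)
  have h2: "image_mset snd P = inc_edges E2 v2" using eb by (simp add: edge_bij_def)
  have eb2: "edge_bij (image_mset prod.swap P) (inc_edges E2 v2) (inc_edges E1 v1)"
    using edge_bij_swap[OF eb] .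
  have c: "bd (image_mset (\<lambda>(e, f). Upair (other_end v1 e) (other_end v2 f)) P) X' = bd (inc_edges E1 v1) X"
  proof -
    have "bd (image_mset (\<lambda>(e, f). Upair (other_end v1 e) (other_end v2 f)) P) X'
        = size (filter_mset (\<lambda>x. crosses X' ((\<lambda>(e, f). Upair (other_end v1 e) (other_end v2 f)) x)) P)"
      by (rule bd_image)
    also have "\<dots> = size (filter_mset (\<lambda>x. crosses X (fst x)) P)"
    proof (rule arg_cong[where f=size], rule filter_mset_cong[OF refl])
      fix x assume x: "x \<in># P"
      obtain e f where ef: "x = (e, f)" by (cases x)
      have pe: "e = Upair v1 (other_end v1 e) \<and> other_end v1 e \<in> V1 \<and> other_end v1 e \<noteq> v1"
        using pair_props[OF mg1 eb] x ef by blast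
      have "(f, e) \<in># image_mset prod.swap P" using x ef by force
      then have pf: "f = Upair v2 (other_end v2 f) \<and> other_end v2 f \<in> V2 \<and> other_end v2 f \<noteq> v2"
        using pair_props[OF mg2 eb2] by blast
      define a where "a = other_end v1 e"
      define b where "b = other_end v2 f"
      have ab: "a \<in> V1" "a \<noteq> v1" "b \<in> V2" "b \<noteq> v2" using pe pf by (auto simp: a_def b_def)
      have "crosses X' (Upair a b) \<longleftrightarrow> crosses X (Upair v1 a)"
        unfolding crosses_Upair using mem1[OF ab(1,2)] mem2[OF ab(3,4)] by blast
      then have "crosses X' (Upair (other_end v1 e) (other_end v2 f)) \<longleftrightarrow> crosses X e"
        using pe unfolding a_def b_def by metis
      then show "crosses X' ((\<lambda>(e, f). Upair (other_end v1 e) (other_end v2 f)) x) = crosses X (fst x)"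
        using ef pe by simp
    qed
    also have "\<dots> = bd (image_mset fst P) X" by (rule bd_image[symmetric])
    finally show ?thesis using h1 by simp
  qed
  have "inc_edges E1 v1 \<subseteq># E1" by (simp add: inc_edges_def)
  then have "E1 = (E1 - inc_edges E1 v1) + inc_edges E1 v1" by simp
  then have d: "bd E1 X = bd (E1 - inc_edges E1 v1) X + bd (inc_edges E1 v1) X"
    by (metis bd_plus)
  show ?thesis unfolding X'_def[symmetric] esum_E_def bd_plus a b c d by simp
qed

lemma esum_bd2:
  assumes mg1: "mgraph V1 E1" and mg2: "mgraph V2 E2" and disj: "V1 \<inter> V2 = {}"
    and eb: "edge_bij P (inc_edges E1 v1) (inc_edges E2 v2)"
    and YV: "Y \<subseteq> V2" "v2 \<notin> Y"
  shows "bd (esum_E E1 E2 v1 v2 P) Y = bd E2 Y"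
proof -
  have "bd (esum_E E2 E1 v2 v1 (image_mset prod.swap P)) ((Y - {v2}) \<union> (if v2 \<in> Y then V1 - {v1} else {})) = bd E2 Y"
    by (rule esum_bd1[OF mg2 mg1 _ edge_bij_swap[OF eb] YV(1)]) (use disj in auto)
  moreover have "(Y - {v2}) \<union> (if v2 \<in> Y then V1 - {v1} else {}) = Y" using YV by auto
  ultimately show ?thesis using esum_E_swap by metis
qed

lemma mgraph_esum:
  assumes mg1: "mgraph V1 E1" and mg2: "mgraph V2 E2" and disj: "V1 \<inter> V2 = {}"
    and eb: "edge_bij P (inc_edges E1 v1) (inc_edges E2 v2)"
  shows "mgraph (esum_V V1 V2 v1 v2) (esum_E E1 E2 v1 v2 P)"
  unfolding mgraph_def
proof (rule conjI[OF _ ballI])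
  show "finite (esum_V V1 V2 v1 v2)" using mg1 mg2 by (auto simp: mgraph_def esum_V_def)
next
  fix e assume "e \<in># esum_E E1 E2 v1 v2 P"
  then consider "e \<in># E1 - inc_edges E1 v1" | "e \<in># E2 - inc_edges E2 v2"
    | "e \<in># image_mset (\<lambda>(e, f). Upair (other_end v1 e) (other_end v2 f)) P"
    unfolding esum_E_def by (metis union_iff)
  then show "proper_uprod e \<and> set_uprod e \<subseteq> esum_V V1 V2 v1 v2"
  proof cases
    case 1
    then have "e \<in># E1" "v1 \<notin> set_uprod e" unfolding inc_edges_def diff_filter by auto
    then show ?thesis using mg1 by (auto simp: mgraph_def esum_V_def)
  next
    case 2
    then have "e \<in># E2" "v2 \<notin> set_uprod e" unfolding inc_edges_def diff_filter by auto
    then show ?thesis using mg2 by (auto simp: mgraph_def esum_V_def)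
  next
    case 3
    then obtain e1 f1 where x: "(e1, f1) \<in># P" "e = Upair (other_end v1 e1) (other_end v2 f1)" by auto
    have pe: "other_end v1 e1 \<in> V1 \<and> other_end v1 e1 \<noteq> v1"
      using pair_props[OF mg1 eb x(1)] by blast
    have "(f1, e1) \<in># image_mset prod.swap P" using x by force
    then have pf: "other_end v2 f1 \<in> V2 \<and> other_end v2 f1 \<noteq> v2"
      using pair_props[OF mg2 edge_bij_swap[OF eb]] by blast
    show ?thesis using pe pf x(2) disj by (auto simp: esum_V_def)
  qed
qed

lemma esum_side:
  assumes mg1: "mgraph V1 E1" and mg2: "mgraph V2 E2" and disj: "V1 \<inter> V2 = {}"
    and eb: "edge_bij P (inc_edges E1 v1) (inc_edges E2 v2)"
    and g1: "good k V1 E1 vs1" "hd vs1 = w" "w \<noteq> v1" "w \<in> V1"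
    and g2: "good k V2 E2 vs2" "hd vs2 = v2" "v2 \<in> V2"
  shows "\<exists>vs. good k (esum_V V1 V2 v1 v2) (esum_E E1 E2 v1 v2 P) vs \<and> hd vs = w"
proof -
  have d1: "distinct vs1" "set vs1 = V1" using g1 by (auto simp: good_def)
  have d2: "distinct vs2" "set vs2 = V2" using g2 by (auto simp: good_def)
  obtain t where t: "vs2 = v2 # t" using g2 d2 by (cases vs2) auto
  have tset: "set t = V2 - {v2}" "distinct t" using t d2 by auto
  obtain t1 where t1: "vs1 = w # t1" using g1 d1 by (cases vs1) auto
  let ?A = "filter (\<lambda>x. x \<noteq> v1) vs1"
  let ?vs = "?A @ t"
  let ?E = "esum_E E1 E2 v1 v2 P"
  have Aset: "set ?A = V1 - {v1}" using d1 by auto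
  have dist: "distinct ?vs" using d1 tset disj Aset by auto
  have vset: "set ?vs = esum_V V1 V2 v1 v2" using Aset tset by (auto simp: esum_V_def)
  have hd: "hd ?vs = w" using t1 g1 by simp
  have main: "\<exists>Z\<subseteq>esum_V V1 V2 v1 v2. x \<in> Z \<and> bd ?E Z \<le> k \<and> (\<forall>y. before ?vs y x \<longrightarrow> y \<notin> Z)"
    if x: "x \<in> set ?vs" for x
  proof (cases "x \<in> set ?A")
    case True
    then have xv: "x \<in> set vs1" "x \<noteq> v1" by auto
    then obtain X where X: "X \<subseteq> V1" "x \<in> X" "bd E1 X \<le> k" "\<forall>y. before vs1 y x \<longrightarrow> y \<notin> X"
      using g1(1) unfolding good_def by blast
    define Z where "Z = (X - {v1}) \<union> (if v1 \<in> X then V2 - {v2} else {})"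
    have bdZ: "bd ?E Z = bd E1 X" unfolding Z_def by (rule esum_bd1[OF mg1 mg2 disj eb X(1)])
    have ZV: "Z \<subseteq> esum_V V1 V2 v1 v2" using X(1) by (auto simp: Z_def esum_V_def)
    have yZ: "y \<notin> Z" if b: "before ?vs y x" for y
    proof -
      from before_append[OF b] have "before ?A y x \<or> x \<in> set t" by blast
      moreover have "x \<notin> set t" using xv d1 tset disj by auto
      ultimately have "before ?A y x" by blast
      then have bv: "before vs1 y x" by (rule before_filter)
      then have "y \<notin> X" "y \<in> V1" using X(4) before_set[OF bv] d1 by auto
      then show ?thesis using disj by (auto simp: Z_def)
    qed
    have xZ: "x \<in> Z" using X(2) xv(2) by (simp add: Z_def)
    have "bd ?E Z \<le> k" using bdZ X(3) by simp
    then show ?thesis using ZV xZ yZ by blast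
  next
    case False
    then have xt: "x \<in> set t" using x by auto
    then have xv: "x \<in> set vs2" using t by simp
    then obtain Y where Y: "Y \<subseteq> V2" "x \<in> Y" "bd E2 Y \<le> k" "\<forall>y. before vs2 y x \<longrightarrow> y \<notin> Y"
      using g2(1) unfolding good_def by blast
    have "before vs2 v2 x" using t xt by (simp add: before_Cons)
    then have v2Y: "v2 \<notin> Y" using Y(4) by blast
    have bdY: "bd ?E Y = bd E2 Y" by (rule esum_bd2[OF mg1 mg2 disj eb Y(1) v2Y])
    have YV: "Y \<subseteq> esum_V V1 V2 v1 v2" using Y(1) v2Y by (auto simp: esum_V_def)
    have yY: "y \<notin> Y" if b: "before ?vs y x" for y
    proof -
      from before_append[OF b] consider "before ?A y x" | "y \<in> set ?A" | "before t y x" by blast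
      then show ?thesis
      proof cases
        case 1
        then have "x \<in> set ?A" using before_set[of ?A y x] by blast
        then show ?thesis using False by blast
      next
        case 2
        then show ?thesis using Y(1) Aset disj by auto
      next
        case 3
        then have "before vs2 y x" using t by (simp add: before_Cons)
        then show ?thesis using Y(4) by blast
      qed
    qed
    have "bd ?E Y \<le> k" using bdY Y(3) by simp
    then show ?thesis using YV Y(2) yY by blast
  qed
  have "good k (esum_V V1 V2 v1 v2) ?E ?vs" unfolding good_def using dist vset main by blast
  then show ?thesis using hd by blast
qed

lemma inv_esum:
  assumes i1: "ginv k V1 E1" and i2: "ginv k V2 E2" and disj: "V1 \<inter> V2 = {}"
    and v: "v1 \<in> V1" "v2 \<in> V2"
    and eb: "edge_bij P (inc_edges E1 v1) (inc_edges E2 v2)"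
  shows "ginv k (esum_V V1 V2 v1 v2) (esum_E E1 E2 v1 v2 P)"
proof -
  have mg1: "mgraph V1 E1" and mg2: "mgraph V2 E2" using i1 i2 by (auto simp: ginv_def)
  have "\<exists>vs. good k (esum_V V1 V2 v1 v2) (esum_E E1 E2 v1 v2 P) vs \<and> hd vs = w"
    if w: "w \<in> esum_V V1 V2 v1 v2" for w
  proof (cases "w \<in> V1 - {v1}")
    case True
    obtain vs1 where vs1: "good k V1 E1 vs1" "hd vs1 = w" using i1 True unfolding ginv_def by blast
    obtain vs2 where vs2: "good k V2 E2 vs2" "hd vs2 = v2" using i2 v unfolding ginv_def by blast
    show ?thesis using esum_side[OF mg1 mg2 disj eb vs1 _ _ vs2 v(2)] True by blast
  next
    case False
    then have wV: "w \<in> V2 - {v2}" using w by (auto simp: esum_V_def)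
    obtain vs2 where vs2: "good k V2 E2 vs2" "hd vs2 = w" using i2 wV unfolding ginv_def by blast
    obtain vs1 where vs1: "good k V1 E1 vs1" "hd vs1 = v1" using i1 v unfolding ginv_def by blast
    have disj': "V2 \<inter> V1 = {}" using disj by auto
    show ?thesis using esum_side[OF mg2 mg1 disj' edge_bij_swap[OF eb] vs2 _ _ vs1 v(1)] wV
      esum_V_swap[of V1 V2 v1 v2] esum_E_swap[of E1 E2 v1 v2 P] by auto
  qed
  then show ?thesis using mgraph_esum[OF mg1 mg2 disj eb] by (simp add: ginv_def)
qed

lemma in_Asum_inv: "in_Asum k V E \<Longrightarrow> ginv k V E"
proof (induction rule: in_Asum.induct)
  case (base V E) then show ?case by (rule inv_base)
next
  case (iso V E f V') then show ?case using inv_iso by blast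
next
  case (union V1 E1 V2 E2) then show ?case using inv_union by blast
next
  case (esum V1 E1 V2 E2 v1 v2 k' P) then show ?case by (intro inv_esum) auto
qed

theorem part2: "(\<forall>(k::nat) (V::nat set) E. k \<ge> 1 \<longrightarrow> in_Asum k V E \<longrightarrow> edge_adm V E \<le> 2 * k - 1)"
proof (intro allI impI)
  fix k :: nat and V :: "nat set" and E
  assume "k \<ge> 1" "in_Asum k V E"
  then have "edge_adm V E \<le> k" using inv_adm in_Asum_inv by blast
  then show "edge_adm V E \<le> 2 * k - 1" using \<open>k \<ge> 1\<close> by linarith
qed


definition contr :: "'a uprod multiset \<Rightarrow> 'a set \<Rightarrow> 'a \<Rightarrow> 'a uprod multiset" where
  "contr E X c = image_mset (map_uprod (\<lambda>x. if x \<in> X then c else x)) (filter_mset (\<lambda>e. \<not> set_uprod e \<subseteq> X) E)"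

lemma crosses_orient:
  assumes "crosses X e"
  obtains a b where "e = Upair a b" "a \<notin> X" "b \<in> X"
proof (cases e)
  case (Upair p q)
  show ?thesis
  proof (cases "p \<in> X")
    case True then show ?thesis using that[of q p] Upair assms by (auto simp: Upair_inject)
  next
    case False then show ?thesis using that[of p q] Upair assms by auto
  qed
qed

lemma contr_mgraph:
  assumes mg: "mgraph V E" and XV: "X \<subseteq> V" and c: "c \<notin> V"
  shows "mgraph ((V - X) \<union> {c}) (contr E X c)"
  unfolding mgraph_def
proof (rule conjI[OF _ ballI])
  show "finite ((V - X) \<union> {c})" using mg by (simp add: mgraph_def)
next
  fix e' assume "e' \<in># contr E X c"
  then obtain e where e: "e \<in># E" "\<not> set_uprod e \<subseteq> X" "e' = map_uprod (\<lambda>x. if x \<in> X then c else x) e"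
    unfolding contr_def by auto
  obtain a b where ab: "e = Upair a b" "a \<noteq> b" "a \<in> V" "b \<in> V" using edge_in[OF mg e(1)] by blast
  have "\<not> (a \<in> X \<and> b \<in> X)" using e(2) ab(1) by auto
  then show "proper_uprod e' \<and> set_uprod e' \<subseteq> (V - X) \<union> {c}"
    using e(3) ab c by auto
qed

lemma contr_bd:
  assumes mg: "mgraph V E" and XV: "X \<subseteq> V" and c: "c \<notin> V"
  shows "bd (contr E X c) Z = bd E (((Z - {c}) - X) \<union> (if c \<in> Z then X else {}))"
  unfolding contr_def
proof (rule bd_map_filter)
  fix e assume e: "e \<in># E" "\<not> set_uprod e \<subseteq> X"
  have "set_uprod e \<subseteq> V" using mg e(1) by (auto simp: mgraph_def)
  then show "\<forall>x\<in>set_uprod e. ((if x \<in> X then c else x) \<in> Z) = (x \<in> ((Z - {c}) - X) \<union> (if c \<in> Z then X else {}))"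
    using c by auto
next
  fix e assume e: "e \<in># E" "\<not> \<not> set_uprod e \<subseteq> X"
  then show "\<not> crosses (((Z - {c}) - X) \<union> (if c \<in> Z then X else {})) e"
    unfolding crosses_def by auto
qed

lemma contr_inc:
  assumes mg: "mgraph V E" and XV: "X \<subseteq> V" and c: "c \<notin> V"
  shows "inc_edges (contr E X c) c = image_mset (map_uprod (\<lambda>x. if x \<in> X then c else x)) (filter_mset (crosses X) E)"
proof -
  let ?f = "\<lambda>x. if x \<in> X then c else x"
  have "inc_edges (contr E X c) c = image_mset (map_uprod ?f)
          (filter_mset (\<lambda>e. c \<in> set_uprod (map_uprod ?f e)) (filter_mset (\<lambda>e. \<not> set_uprod e \<subseteq> X) E))"
    unfolding inc_edges_def contr_def filter_mset_image_mset ..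
  also have "filter_mset (\<lambda>e. c \<in> set_uprod (map_uprod ?f e)) (filter_mset (\<lambda>e. \<not> set_uprod e \<subseteq> X) E)
      = filter_mset (crosses X) E"
    unfolding filter_filter_mset
  proof (rule filter_mset_cong[OF refl])
    fix e assume "e \<in># E"
    then obtain a b where ab: "e = Upair a b" "a \<in> V" "b \<in> V" using edge_in[OF mg] by blast
    then show "(\<not> set_uprod e \<subseteq> X \<and> c \<in> set_uprod (map_uprod ?f e)) = crosses X e"
      using c by auto
  qed
  finally show ?thesis .
qed

lemma contr_rest:
  assumes mg: "mgraph V E" and XV: "X \<subseteq> V" and c: "c \<notin> V"
  shows "contr E X c - inc_edges (contr E X c) c = filter_mset (\<lambda>e. set_uprod e \<subseteq> V - X) E"
proof -
  let ?f = "\<lambda>x. if x \<in> X then c else x"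
  have "contr E X c - inc_edges (contr E X c) c = image_mset (map_uprod ?f)
          (filter_mset (\<lambda>e. c \<notin> set_uprod (map_uprod ?f e)) (filter_mset (\<lambda>e. \<not> set_uprod e \<subseteq> X) E))"
    unfolding inc_edges_def diff_filter unfolding contr_def filter_mset_image_mset ..
  also have "filter_mset (\<lambda>e. c \<notin> set_uprod (map_uprod ?f e)) (filter_mset (\<lambda>e. \<not> set_uprod e \<subseteq> X) E)
      = filter_mset (\<lambda>e. set_uprod e \<subseteq> V - X) E"
    unfolding filter_filter_mset
  proof (rule filter_mset_cong[OF refl])
    fix e assume "e \<in># E"
    then obtain a b where ab: "e = Upair a b" "a \<in> V" "b \<in> V" using edge_in[OF mg] by blast
    then show "(\<not> set_uprod e \<subseteq> X \<and> c \<notin> set_uprod (map_uprod ?f e)) = (set_uprod e \<subseteq> V - X)"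
      using c by auto
  qed
  also have "image_mset (map_uprod ?f) (filter_mset (\<lambda>e. set_uprod e \<subseteq> V - X) E)
      = image_mset id (filter_mset (\<lambda>e. set_uprod e \<subseteq> V - X) E)"
  proof (rule image_mset_cong)
    fix e assume "e \<in># filter_mset (\<lambda>e. set_uprod e \<subseteq> V - X) E"
    then have "set_uprod e \<subseteq> V - X" by simp
    then show "map_uprod ?f e = id e" by (cases e) auto
  qed
  finally show ?thesis by simp
qed

lemma three_split:
  assumes mg: "mgraph V E" and XV: "X \<subseteq> V"
  shows "filter_mset (\<lambda>e. set_uprod e \<subseteq> V - X) E + filter_mset (\<lambda>e. set_uprod e \<subseteq> X) E
         + filter_mset (crosses X) E = E"
proof (rule multiset_eqI)
  fix e
  show "count (filter_mset (\<lambda>e. set_uprod e \<subseteq> V - X) E + filter_mset (\<lambda>e. set_uprod e \<subseteq> X) E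
         + filter_mset (crosses X) E) e = count E e"
  proof (cases "e \<in># E")
    case True
    then obtain a b where ab: "e = Upair a b" "a \<in> V" "b \<in> V" using edge_in[OF mg] by blast
    then show ?thesis unfolding count_union count_filter_mset by auto
  next
    case False
    then show ?thesis unfolding count_union count_filter_mset by (simp add: not_in_iff)
  qed
qed

lemma good_remove:
  assumes g: "good k V E vs" and nc: "\<And>e. e \<in># E \<Longrightarrow> c \<notin> set_uprod e"
  shows "good k (V - {c}) E (filter (\<lambda>x. x \<noteq> c) vs)"
  unfolding good_def
proof (intro conjI ballI)
  show "distinct (filter (\<lambda>x. x \<noteq> c) vs)" "set (filter (\<lambda>x. x \<noteq> c) vs) = V - {c}"
    using g by (auto simp: good_def)
next
  fix x assume x: "x \<in> set (filter (\<lambda>x. x \<noteq> c) vs)"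
  then have "x \<in> set vs" "x \<noteq> c" by auto
  then obtain X where X: "X \<subseteq> V" "x \<in> X" "bd E X \<le> k" "\<forall>y. before vs y x \<longrightarrow> y \<notin> X"
    using g unfolding good_def by blast
  have "bd E (X - {c}) = bd E X"
  proof (rule bd_cong)
    fix e assume "e \<in># E"
    then have "c \<notin> set_uprod e" by (rule nc)
    then show "crosses (X - {c}) e = crosses X e" unfolding crosses_def by auto
  qed
  moreover have "\<forall>y. before (filter (\<lambda>x. x \<noteq> c) vs) y x \<longrightarrow> y \<notin> X - {c}"
  proof (intro allI impI)
    fix y assume "before (filter (\<lambda>x. x \<noteq> c) vs) y x"
    then have "before vs y x" by (rule before_filter)
    then show "y \<notin> X - {c}" using X(4) by blast
  qed
  moreover have "X - {c} \<subseteq> V - {c}" "x \<in> X - {c}" using X(1,2) \<open>x \<noteq> c\<close> by auto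
  ultimately show "\<exists>X'\<subseteq>V - {c}. x \<in> X' \<and> bd E X' \<le> k \<and> (\<forall>y. before (filter (\<lambda>x. x \<noteq> c) vs) y x \<longrightarrow> y \<notin> X')"
    using X(3) by metis
qed

lemma later_in_X:
  assumes d: "distinct vs" and xv: "x \<in> set vs" and xiv: "xi \<in> set vs"
    and xX: "x \<in> X" and Xav: "\<forall>y. before vs y xi \<longrightarrow> y \<notin> X"
    and b: "before vs y xi"
  shows "before vs y x"
proof (cases "x = xi")
  case True then show ?thesis using b by simp
next
  case False
  then have "before vs x xi \<or> before vs xi x" using before_total[OF d xv xiv] by blast
  moreover have "\<not> before vs x xi" using Xav xX by blast
  ultimately have "before vs xi x" by blast
  then show ?thesis using before_trans[OF d b] by blast
qed

lemma G2_good: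
  assumes mg: "mgraph V E" and g: "good k V E vs" and xiV: "xi \<in> V"
    and XV: "X \<subseteq> V" and xiX: "xi \<in> X" and Xav: "\<forall>y. before vs y xi \<longrightarrow> y \<notin> X"
    and minX: "\<And>Y. Y \<subseteq> V \<Longrightarrow> xi \<in> Y \<Longrightarrow> (\<forall>y. before vs y xi \<longrightarrow> y \<notin> Y) \<Longrightarrow> bd E X \<le> bd E Y"
    and dV: "d \<notin> V"
  shows "good k (X \<union> {d}) (contr E (V - X) d) (d # filter (\<lambda>x. x \<in> X) vs)"
proof -
  have dv: "distinct vs" "set vs = V" using g by (auto simp: good_def)
  let ?L = "filter (\<lambda>x. x \<in> X) vs"
  let ?E2 = "contr E (V - X) d"
  have VX: "V - (V - X) = X" using XV by auto
  have mg2: "mgraph (X \<union> {d}) ?E2" using contr_mgraph[OF mg _ dV, of "V - X"] VX by simp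
  have Lset: "set ?L = X" using dv XV by auto
  have dist: "distinct (d # ?L)" using dv dV XV by auto
  have main: "\<exists>Z\<subseteq>X \<union> {d}. x \<in> Z \<and> bd ?E2 Z \<le> k \<and> (\<forall>y. before (d # ?L) y x \<longrightarrow> y \<notin> Z)"
    if x: "x \<in> set (d # ?L)" for x
  proof (cases "x = d")
    case True
    have "bd ?E2 (X \<union> {d}) = 0" by (rule mgraph_bd_V[OF mg2])
    then have "bd ?E2 (X \<union> {d}) \<le> k" by simp
    moreover have "\<forall>y. before (d # ?L) y x \<longrightarrow> y \<notin> X \<union> {d}" using True good_head[OF dist] by blast
    moreover have "x \<in> X \<union> {d}" using True by simp
    ultimately show ?thesis by blast
  next
    case False
    then have xX: "x \<in> X" using x Lset by auto
    then have xv: "x \<in> set vs" using XV dv by auto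
    obtain W where W: "W \<subseteq> V" "x \<in> W" "bd E W \<le> k" "\<forall>y. before vs y x \<longrightarrow> y \<notin> W"
      using g xv unfolding good_def by blast
    let ?Z = "W \<inter> X"
    have "bd ?E2 ?Z = bd E (((?Z - {d}) - (V - X)) \<union> (if d \<in> ?Z then V - X else {}))"
      by (rule contr_bd[OF mg _ dV]) auto
    also have "((?Z - {d}) - (V - X)) \<union> (if d \<in> ?Z then V - X else {}) = ?Z" using dV XV by auto
    finally have bZ: "bd ?E2 ?Z = bd E ?Z" .
    have "bd E X \<le> bd E (W \<union> X)"
    proof (rule minX)
      show "W \<union> X \<subseteq> V" using W(1) XV by auto
      show "xi \<in> W \<union> X" using xiX by auto
      show "\<forall>y. before vs y xi \<longrightarrow> y \<notin> W \<union> X"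
      proof (intro allI impI)
        fix y assume b: "before vs y xi"
        have "before vs y x" using later_in_X[OF dv(1) xv _ xX Xav b] xiV dv by auto
        then show "y \<notin> W \<union> X" using W(4) Xav b by blast
      qed
    qed
    then have "bd E ?Z \<le> bd E W" using bd_submod[of E W X] by linarith
    then have bk: "bd ?E2 ?Z \<le> k" using bZ W(3) by linarith
    have av: "\<forall>y. before (d # ?L) y x \<longrightarrow> y \<notin> ?Z"
    proof (intro allI impI)
      fix y assume "before (d # ?L) y x"
      then have "(y = d \<and> x \<in> set ?L) \<or> before ?L y x" by (simp add: before_Cons)
      then show "y \<notin> ?Z"
      proof
        assume "y = d \<and> x \<in> set ?L"
        then show ?thesis using dV W(1) by auto
      next
        assume "before ?L y x"
        then have "before vs y x" by (rule before_filter)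
        then show ?thesis using W(4) by blast
      qed
    qed
    have "?Z \<subseteq> X \<union> {d}" "x \<in> ?Z" using xX W(2) by auto
    then show ?thesis using bk av by blast
  qed
  have "set (d # ?L) = X \<union> {d}" using Lset by auto
  then show ?thesis unfolding good_def using dist main by blast
qed

lemma G1_good:
  assumes mg: "mgraph V E" and g: "good k V E vs" and xiV: "xi \<in> V"
    and XV: "X \<subseteq> V" and xiX: "xi \<in> X" and Xav: "\<forall>y. before vs y xi \<longrightarrow> y \<notin> X"
    and minX: "\<And>Y. Y \<subseteq> V \<Longrightarrow> xi \<in> Y \<Longrightarrow> (\<forall>y. before vs y xi \<longrightarrow> y \<notin> Y) \<Longrightarrow> bd E X \<le> bd E Y"
    and cV: "c \<notin> V"
  shows "good k ((V - X) \<union> {c}) (contr E X c) (map (\<lambda>x. if x = xi then c else x) (filter (\<lambda>x. x \<notin> X \<or> x = xi) vs))"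
proof -
  have dv: "distinct vs" "set vs = V" using g by (auto simp: good_def)
  define h where "h = (\<lambda>x. if x = xi then c else x)"
  let ?L = "filter (\<lambda>x. x \<notin> X \<or> x = xi) vs"
  let ?E1 = "contr E X c"
  have Lset: "set ?L = (V - X) \<union> {xi}" using dv xiV by auto
  have inj: "inj_on h (set ?L)" unfolding inj_on_def h_def using Lset cV xiV by auto
  have dist: "distinct (map h ?L)" using dv inj by (simp add: distinct_map)
  have vset: "set (map h ?L) = (V - X) \<union> {c}" using Lset xiX by (auto simp: h_def)
  have main: "\<exists>Z\<subseteq>(V - X) \<union> {c}. x' \<in> Z \<and> bd ?E1 Z \<le> k \<and> (\<forall>y. before (map h ?L) y x' \<longrightarrow> y \<notin> Z)"
    if x': "x' \<in> set (map h ?L)" for x'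
  proof -
    obtain x where x: "x \<in> set ?L" "x' = h x" using x' by auto
    then have xv: "x \<in> set vs" by simp
    obtain W where W: "W \<subseteq> V" "x \<in> W" "bd E W \<le> k" "\<forall>y. before vs y x \<longrightarrow> y \<notin> W"
      using g xv unfolding good_def by blast
    define Z where "Z = (W - X) \<union> (if xi \<in> W then {c} else {})"
    have cW: "c \<notin> W" using W(1) cV by auto
    have "bd ?E1 Z = bd E (((Z - {c}) - X) \<union> (if c \<in> Z then X else {}))"
      by (rule contr_bd[OF mg XV cV])
    also have "((Z - {c}) - X) \<union> (if c \<in> Z then X else {}) = (if xi \<in> W then W \<union> X else W - X)"
      using cW by (auto simp: Z_def)
    finally have bZ: "bd ?E1 Z = bd E (if xi \<in> W then W \<union> X else W - X)" .
    have bk: "bd ?E1 Z \<le> k"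
    proof (cases "xi \<in> W")
      case True
      have "bd E X \<le> bd E (W \<inter> X)"
        by (rule minX) (use W(1) True Xav xiX in auto)
      then have "bd E (W \<union> X) \<le> bd E W" using bd_submod[of E W X] by linarith
      then show ?thesis using bZ True W(3) by simp
    next
      case False
      have "bd E X \<le> bd E (X - W)"
        by (rule minX) (use XV False xiX Xav in auto)
      then have "bd E (W - X) \<le> bd E W" using bd_posimod[of E W X] by linarith
      then show ?thesis using bZ False W(3) by simp
    qed
    have xZ: "x' \<in> Z"
    proof (cases "x = xi")
      case True then show ?thesis using x W(2) by (simp add: Z_def h_def)
    next
      case False
      then have "x \<notin> X" using x(1) by auto
      then show ?thesis using x W(2) False by (simp add: Z_def h_def)
    qed
    have ZV: "Z \<subseteq> (V - X) \<union> {c}" using W(1) by (auto simp: Z_def)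
    have av: "\<forall>y'. before (map h ?L) y' x' \<longrightarrow> y' \<notin> Z"
    proof (intro allI impI)
      fix y' assume b: "before (map h ?L) y' x'"
      obtain y x0 where yx: "h y = y'" "h x0 = x'" "before ?L y x0" using before_map[OF b] by blast
      have inL: "y \<in> set ?L" "x0 \<in> set ?L" using before_set[OF yx(3)] by auto
      have "h x0 = h x" using yx(2) x(2) by simp
      then have "x0 = x" using inj_onD[OF inj _ inL(2) x(1)] by blast
      then have "before vs y x" using yx(3) before_filter by metis
      then have yW: "y \<notin> W" using W(4) by blast
      have yV: "y \<in> V" using inL(1) dv by auto
      show "y' \<notin> Z"
      proof (cases "y = xi")
        case True
        then have "y' = c" using yx(1) by (simp add: h_def)
        then show ?thesis using True yW cV W(1) by (auto simp: Z_def)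
      next
        case False
        then have "y' = y" using yx(1) by (simp add: h_def)
        then show ?thesis using yW yV cV by (auto simp: Z_def)
      qed
    qed
    show ?thesis using ZV xZ bk av by blast
  qed
  show ?thesis unfolding good_def h_def[symmetric] using dist vset main by blast
qed


lemma oe_Upair: "other_end v (Upair v x) = x"
  unfolding other_end_def by (rule the_equality) auto

lemma fresh_nat: "finite (V::nat set) \<Longrightarrow> x \<in> V \<Longrightarrow> x < Suc (Max (insert 0 V))"
proof -
  assume "finite V" "x \<in> V"
  then have "x \<le> Max (insert 0 V)" by (intro Max_ge) auto
  then show ?thesis by simp
qed

lemma part1_main:
  fixes V :: "nat set"
  assumes "mgraph V E" "good k V E vs"
  shows "in_Asum k V E"
  using assms
proof (induction "card V" arbitrary: V E vs rule: less_induct)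
  case less
  note mg = less.prems(1) and g = less.prems(2)
  have dv: "distinct vs" "set vs = V" using g by (auto simp: good_def)
  have finV: "finite V" using mg by (simp add: mgraph_def)
  show ?case
  proof (cases "\<exists>u. \<forall>v\<in>V. v \<noteq> u \<longrightarrow> deg E v \<le> k")
    case True
    then have "in_A k V E" using mg by (simp add: in_A_def)
    then show ?thesis by (rule in_Asum.base)
  next
    case False
    have "\<not> (\<forall>v\<in>V. v \<noteq> 0 \<longrightarrow> deg E v \<le> k)" using False by blast
    then obtain a where a: "a \<in> V" "\<not> deg E a \<le> k" by blast
    have "\<not> (\<forall>v\<in>V. v \<noteq> a \<longrightarrow> deg E v \<le> k)" using False by blast
    then obtain b where b: "b \<in> V" "b \<noteq> a" "\<not> deg E b \<le> k" by blast
    obtain h xi where hx: "h \<in> V" "xi \<in> V" "deg E h > k" "deg E xi > k" "before vs h xi"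
    proof -
      have "before vs a b \<or> before vs b a" using before_total[OF dv(1), of a b] a(1) b(1,2) dv(2) by blast
      moreover have "deg E a > k" "deg E b > k" using a b by auto
      ultimately show ?thesis using that a(1) b(1) by blast
    qed
    define P where "P = (\<lambda>Y. Y \<subseteq> V \<and> xi \<in> Y \<and> (\<forall>y. before vs y xi \<longrightarrow> y \<notin> Y))"
    obtain W where W: "W \<subseteq> V" "xi \<in> W" "bd E W \<le> k" "\<forall>y. before vs y xi \<longrightarrow> y \<notin> W"
      using g hx(2) dv unfolding good_def by blast
    have "P W" using W by (simp add: P_def)
    then obtain X where X: "P X" and Xmin: "\<And>Y. P Y \<Longrightarrow> bd E X \<le> bd E Y"
      using ex_has_least_nat[of P W "bd E"] by blast
    have XV: "X \<subseteq> V" and xiX: "xi \<in> X" and Xav: "\<forall>y. before vs y xi \<longrightarrow> y \<notin> X"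
      using X by (auto simp: P_def)
    have minX: "\<And>Y. Y \<subseteq> V \<Longrightarrow> xi \<in> Y \<Longrightarrow> (\<forall>y. before vs y xi \<longrightarrow> y \<notin> Y) \<Longrightarrow> bd E X \<le> bd E Y"
      using Xmin unfolding P_def by blast
    have bX: "bd E X \<le> k" using Xmin[OF \<open>P W\<close>] W(3) by linarith
    have hX: "h \<notin> X" using Xav hx(5) by blast
    have finX: "finite X" using XV finV by (rule finite_subset)
    have "X \<noteq> {xi}"
    proof
      assume "X = {xi}"
      then have "bd E X = deg E xi" using mgraph_bd_single[OF mg] by simp
      then show False using bX hx(4) by linarith
    qed
    then obtain z where z: "z \<in> X" "z \<noteq> xi" using xiX by blast
    have cX: "card X \<ge> 2"
    proof -
      have "card {xi, z} \<le> card X" using z xiX finX by (intro card_mono) auto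
      then show ?thesis using z by simp
    qed
    have "V - X \<noteq> {h}"
    proof
      assume "V - X = {h}"
      then have "bd E (V - X) = deg E h" using mgraph_bd_single[OF mg] by simp
      then show False using bd_compl[OF mg, of X] bX hx(3) by linarith
    qed
    then obtain z2 where z2: "z2 \<in> V - X" "z2 \<noteq> h" using hx(1) hX by blast
    have cVX: "card (V - X) \<ge> 2"
    proof -
      have "card {h, z2} \<le> card (V - X)" using z2 hx(1) hX finV by (intro card_mono) auto
      then show ?thesis using z2 by simp
    qed
    have cardV: "card V = card X + card (V - X)"
      using card_Diff_subset[OF finX XV] card_mono[OF finV XV] by linarith
    define c where "c = Suc (Max (insert 0 V))"
    define d where "d = Suc c"
    have cV: "c \<notin> V" unfolding c_def using fresh_nat[OF finV] by blast
    have dV: "d \<notin> V" unfolding d_def c_def using fresh_nat[OF finV]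
      by (meson less_SucI order_less_irrefl)
    have cd: "c \<noteq> d" by (simp add: d_def)
    define V1 where "V1 = (V - X) \<union> {c}"
    define V2 where "V2 = X \<union> {d}"
    define E1 where "E1 = contr E X c"
    define E2 where "E2 = contr E (V - X) d"
    have VX: "V - (V - X) = X" using XV by auto
    have mg1: "mgraph V1 E1" unfolding V1_def E1_def by (rule contr_mgraph[OF mg XV cV])
    have mg2: "mgraph V2 E2" unfolding V2_def E2_def using contr_mgraph[OF mg _ dV, of "V - X"] VX by simp
    have cardV1: "card V1 = card (V - X) + 1" unfolding V1_def using cV finV by simp
    have "d \<notin> X" using dV XV by auto
    then have cardV2: "card V2 = card X + 1" unfolding V2_def using finX by simp
    obtain vs1 where g1: "good k V1 E1 vs1"
      using G1_good[OF mg g hx(2) XV xiX Xav minX cV] unfolding V1_def E1_def by blast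
    obtain vs2 where g2: "good k V2 E2 vs2"
      using G2_good[OF mg g hx(2) XV xiX Xav minX dV] unfolding V2_def E2_def by blast
    let ?f1 = "\<lambda>x. if x \<in> X then c else x"
    let ?f2 = "\<lambda>x. if x \<in> V - X then d else x"
    have crossE: "filter_mset (crosses (V - X)) E = filter_mset (crosses X) E"
    proof (rule filter_mset_cong[OF refl])
      fix e assume "e \<in># E"
      then obtain p q where "e = Upair p q" "p \<in> V" "q \<in> V" using edge_in[OF mg] by blast
      then show "crosses (V - X) e = crosses X e" by auto
    qed
    have inc1: "inc_edges E1 c = image_mset (map_uprod ?f1) (filter_mset (crosses X) E)"
      unfolding E1_def by (rule contr_inc[OF mg XV cV])
    have inc2: "inc_edges E2 d = image_mset (map_uprod ?f2) (filter_mset (crosses X) E)"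
      unfolding E2_def using contr_inc[OF mg _ dV, of "V - X"] crossE by simp
    have rest1: "E1 - inc_edges E1 c = filter_mset (\<lambda>e. set_uprod e \<subseteq> V - X) E"
      unfolding E1_def by (rule contr_rest[OF mg XV cV])
    have rest2: "E2 - inc_edges E2 d = filter_mset (\<lambda>e. set_uprod e \<subseteq> X) E"
      unfolding E2_def using contr_rest[OF mg _ dV, of "V - X"] VX by simp
    have split3: "filter_mset (\<lambda>e. set_uprod e \<subseteq> V - X) E + filter_mset (\<lambda>e. set_uprod e \<subseteq> X) E
         + filter_mset (crosses X) E = E" by (rule three_split[OF mg XV])
    have sizeF: "size (filter_mset (crosses X) E) = bd E X" by (simp add: bd_def)
    show ?thesis
    proof (cases "bd E X = 0")
      case True
      then have F0: "filter_mset (crosses X) E = {#}" using sizeF by simp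
      then have i1: "inc_edges E1 c = {#}" and i2: "inc_edges E2 d = {#}" using inc1 inc2 by simp_all
      then have E1eq: "E1 = filter_mset (\<lambda>e. set_uprod e \<subseteq> V - X) E"
        and E2eq: "E2 = filter_mset (\<lambda>e. set_uprod e \<subseteq> X) E" using rest1 rest2 by simp_all
      have nc1: "c \<notin> set_uprod e" if "e \<in># E1" for e
      proof
        assume "c \<in> set_uprod e"
        then have "e \<in># inc_edges E1 c" using that by (simp add: inc_edges_def)
        then show False using i1 by simp
      qed
      have nc2: "d \<notin> set_uprod e" if "e \<in># E2" for e
      proof
        assume "d \<in> set_uprod e"
        then have "e \<in># inc_edges E2 d" using that by (simp add: inc_edges_def)
        then show False using i2 by simp
      qed
      have g1': "good k (V1 - {c}) E1 (filter (\<lambda>x. x \<noteq> c) vs1)" by (rule good_remove[OF g1 nc1])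
      have g2': "good k (V2 - {d}) E2 (filter (\<lambda>x. x \<noteq> d) vs2)" by (rule good_remove[OF g2 nc2])
      have V1c: "V1 - {c} = V - X" using cV by (auto simp: V1_def)
      have V2d: "V2 - {d} = X" using dV XV by (auto simp: V2_def)
      have mg1': "mgraph (V - X) E1" using mg1 nc1 unfolding mgraph_def V1_def by blast
      have mg2': "mgraph X E2" using mg2 nc2 unfolding mgraph_def V2_def by blast
      have lt1: "card (V - X) < card V" using cardV cX by linarith
      have lt2: "card X < card V" using cardV cVX by linarith
      have ih1: "in_Asum k (V - X) E1"
        using less.hyps[OF lt1 mg1'] g1' V1c by simp
      have ih2: "in_Asum k X E2"
        using less.hyps[OF lt2 mg2'] g2' V2d by simp
      have "in_Asum k ((V - X) \<union> X) (E1 + E2)"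
        by (rule in_Asum.union[OF ih1 ih2]) auto
      moreover have "(V - X) \<union> X = V" using XV by auto
      moreover have "E1 + E2 = E" using split3 F0 E1eq E2eq by simp
      ultimately show ?thesis by simp
    next
      case False
      define P where "P = image_mset (\<lambda>e. (map_uprod ?f1 e, map_uprod ?f2 e)) (filter_mset (crosses X) E)"
      have eb: "edge_bij P (inc_edges E1 c) (inc_edges E2 d)"
        unfolding edge_bij_def P_def inc1 inc2 by (simp add: multiset.map_comp o_def)
      have deg1: "deg E1 c = bd E X" unfolding deg_def inc1 sizeF[symmetric] by simp
      have deg2: "deg E2 d = bd E X" unfolding deg_def inc2 sizeF[symmetric] by simp
      have lt1: "card V1 < card V" using cardV1 cardV cX by linarith
      have lt2: "card V2 < card V" using cardV2 cardV cVX by linarith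
      have ih1: "in_Asum k V1 E1" by (rule less.hyps[OF lt1 mg1 g1])
      have ih2: "in_Asum k V2 E2" by (rule less.hyps[OF lt2 mg2 g2])
      have disj: "V1 \<inter> V2 = {}" using cV dV cd XV by (auto simp: V1_def V2_def)
      have "in_Asum k (esum_V V1 V2 c d) (esum_E E1 E2 c d P)"
        by (rule in_Asum.esum[OF ih1 ih2 disj _ _ deg1 deg2 _ bX eb])
           (use False in \<open>auto simp: V1_def V2_def\<close>)
      moreover have "esum_V V1 V2 c d = V"
        using cV dV XV by (auto simp: esum_V_def V1_def V2_def)
      moreover have "esum_E E1 E2 c d P = E"
      proof -
        have "image_mset (\<lambda>(e, f). Upair (other_end c e) (other_end d f)) P
            = image_mset (\<lambda>e. Upair (other_end c (map_uprod ?f1 e)) (other_end d (map_uprod ?f2 e))) (filter_mset (crosses X) E)"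
          unfolding P_def by (simp add: multiset.map_comp o_def)
        also have "\<dots> = image_mset id (filter_mset (crosses X) E)"
        proof (rule image_mset_cong)
          fix e assume e: "e \<in># filter_mset (crosses X) E"
          then have eE: "e \<in># E" "crosses X e" by auto
          obtain p q where pq: "e = Upair p q" "p \<notin> X" "q \<in> X" using crosses_orient[OF eE(2)] by blast
          have "p \<in> V" "q \<in> V" using edge_in[OF mg eE(1)] pq(1) by auto
          then have m1: "map_uprod ?f1 e = Upair c p" and m2: "map_uprod ?f2 e = Upair d q"
            using pq by auto
          show "Upair (other_end c (map_uprod ?f1 e)) (other_end d (map_uprod ?f2 e)) = id e"
            unfolding m1 m2 oe_Upair using pq(1) by simp
        qed
        finally have N: "image_mset (\<lambda>(e, f). Upair (other_end c e) (other_end d f)) P = filter_mset (crosses X) E"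
          by simp
        show ?thesis unfolding esum_E_def rest1 rest2 N using split3 .
      qed
      ultimately show ?thesis by simp
    qed
  qed
qed

theorem part1: "(\<forall>(k::nat) (V::nat set) E. mgraph V E \<longrightarrow> edge_adm V E \<le> k \<longrightarrow> in_Asum k V E)"
proof (intro allI impI)
  fix k :: nat and V :: "nat set" and E
  assume "mgraph V E" "edge_adm V E \<le> k"
  then obtain vs where "good k V E vs" using adm_good by blast
  then show "in_Asum k V E" using part1_main \<open>mgraph V E\<close> by blast
qed


theorem mainTheorem5:
  shows "(\<forall>(k::nat) (V::nat set) E. mgraph V E \<longrightarrow> edge_adm V E \<le> k \<longrightarrow> in_Asum k V E)
       \<and> (\<forall>(k::nat) (V::nat set) E. k \<ge> 1 \<longrightarrow> in_Asum k V E \<longrightarrow> edge_adm V E \<le> 2 * k - 1)"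
  using part1 part2 by blast

end
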